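(* There is a one-pass streaming algorithm in the VArand model that takes as input a graph $G=(V,E)$ with $|V|=n$, $|E|=m$, a coloring $f:V\to[C]$, and a parameter $\varepsilon>0$. With high probability it correctly distinguishes between the two cases "$f$ is valid" and "$f$ is $\varepsilon$-far from valid". With high probability it uses $\widetilde{\mathcal O}\!\left(\frac{|V|}{\sqrt{\varepsilon|E|}}\right)$ space.
   Context: A coloring $f:V\to[C]$ is valid if no edge $(u,v)\in E$ has $f(u)=f(v)$. It is $\varepsilon$-far from valid if at least $\varepsilon|E|$ edges are monochromatic, i.e., have equal colors at both endpoints. The task (Conflict-Sep) is to output "valid" in the first case and "far" in the second. VArand model: the vertices are revealed one at a time, in an order chosen uniformly at random among all permutations of $V$. When a vertex $v$ is revealed, its color $f(v)$ is revealed, and then all edges from $v$ to previously revealed vertices are revealed. Colors of earlier vertices are not revealed again. "With high probability" means probability at least $1-1/n^c$ for an absolute constant $c>0$. $\widetilde{\mathcal O}$ hides polylogarithmic factors. *)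

theory Defs
  imports "HOL-Probability.Probability" "HOL-Combinatorics.Multiset_Permutations"
begin

definition is_graph :: "nat \<Rightarrow> nat set set \<Rightarrow> bool" where
  "is_graph n E \<longleftrightarrow> (\<forall>e\<in>E. e \<subseteq> {0..<n} \<and> card e = 2)"

definition mono_edges :: "(nat \<Rightarrow> nat) \<Rightarrow> nat set set \<Rightarrow> nat set set" where
  "mono_edges f E = {e \<in> E. \<exists>u v. e = {u, v} \<and> f u = f v}"

definition valid_coloring :: "(nat \<Rightarrow> nat) \<Rightarrow> nat set set \<Rightarrow> bool" where
  "valid_coloring f E \<longleftrightarrow> mono_edges f E = {}"

definition far_from_valid :: "real \<Rightarrow> (nat \<Rightarrow> nat) \<Rightarrow> nat set set \<Rightarrow> bool" where
  "far_from_valid \<epsilon> f E \<longleftrightarrow> real (card (mono_edges f E)) \<ge> \<epsilon> * real (card E)"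

text \<open>Stream elements of the VArand model: a vertex with its colour, then the edges
  from that vertex to previously revealed vertices.\<close>
datatype event = VArr nat nat | EArr nat nat

text \<open>The stream induced by a vertex order (pre = already revealed vertices, most recent first).
  Edges of a newly revealed vertex v to earlier vertices u come in order of revelation of u.\<close>
fun vstream :: "(nat \<Rightarrow> nat) \<Rightarrow> nat set set \<Rightarrow> nat list \<Rightarrow> nat list \<Rightarrow> event list" where
  "vstream f E pre [] = []"
| "vstream f E pre (v # vs) =
     (VArr v (f v) # map (\<lambda>u. EArr u v) (filter (\<lambda>u. {u, v} \<in> E) (rev pre)))
     @ vstream f E (v # pre) vs"

text \<open>A randomized one-pass streaming algorithm. Its memory is a bit string; it knows the
  parameters (n, m, C, eps) in advance.\<close>
record stream_alg =
  alg_init :: "nat \<Rightarrow> nat \<Rightarrow> nat \<Rightarrow> real \<Rightarrow> bool list pmf"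
  alg_step :: "nat \<Rightarrow> nat \<Rightarrow> nat \<Rightarrow> real \<Rightarrow> bool list \<Rightarrow> event \<Rightarrow> bool list pmf"
  alg_out  :: "nat \<Rightarrow> nat \<Rightarrow> nat \<Rightarrow> real \<Rightarrow> bool list \<Rightarrow> bool pmf"

fun exec :: "(bool list \<Rightarrow> event \<Rightarrow> bool list pmf) \<Rightarrow> event list \<Rightarrow> bool list \<Rightarrow> (bool list \<times> nat) pmf" where
  "exec st [] s = return_pmf (s, length s)"
| "exec st (e # es) s =
     bind_pmf (st s e) (\<lambda>s'. map_pmf (\<lambda>(t, k). (t, max (length s) k)) (exec st es s'))"

text \<open>Outcome distribution (answer, space): True = "valid", False = "far".
  Randomness: uniformly random vertex order plus the algorithm's own coins.\<close>
definition outcome :: "stream_alg \<Rightarrow> nat \<Rightarrow> nat set set \<Rightarrow> nat \<Rightarrow> (nat \<Rightarrow> nat) \<Rightarrow> real \<Rightarrow> (bool \<times> nat) pmf" where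
  "outcome A n E C f \<epsilon> =
     bind_pmf (pmf_of_set (permutations_of_set {0..<n})) (\<lambda>\<sigma>.
     bind_pmf (alg_init A n (card E) C \<epsilon>) (\<lambda>s0.
     bind_pmf (exec (alg_step A n (card E) C \<epsilon>) (vstream f E [] \<sigma>) s0) (\<lambda>(s, sp).
     map_pmf (\<lambda>b. (b, sp)) (alg_out A n (card E) C \<epsilon> s))))"

end

theory Submission
  imports Defs
begin


definition Av :: "nat \<Rightarrow> 'a set \<Rightarrow> 'a list set" where
  "Av T U = {\<sigma>. set (take T \<sigma>) \<inter> U = {}}"

lemma Av_split:
  assumes "finite A" "A \<noteq> {}"
  shows "permutations_of_set A \<inter> Av (Suc T) U =
     (\<Union>x\<in>A - U. (\<lambda>xs. x # xs) ` (permutations_of_set (A - {x}) \<inter> Av T U))"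
proof -
  have eq: "(\<lambda>xs. x # xs) ` B \<inter> Av (Suc T) U = (if x \<in> U then {} else (\<lambda>xs. x # xs) ` (B \<inter> Av T U))"
    for x :: 'a and B by (auto simp: Av_def)
  have "permutations_of_set A \<inter> Av (Suc T) U =
     (\<Union>x\<in>A. (\<lambda>xs. x # xs) ` permutations_of_set (A - {x})) \<inter> Av (Suc T) U"
    by (simp only: permutations_of_set_nonempty[OF assms(2)])
  also have "\<dots> = (\<Union>x\<in>A. (\<lambda>xs. x # xs) ` permutations_of_set (A - {x}) \<inter> Av (Suc T) U)"
    by blast
  also have "\<dots> = (\<Union>x\<in>A. if x \<in> U then {} else (\<lambda>xs. x # xs) ` (permutations_of_set (A - {x}) \<inter> Av T U))"
    by (simp only: eq)
  also have "\<dots> = (\<Union>x\<in>A - U. (\<lambda>xs. x # xs) ` (permutations_of_set (A - {x}) \<inter> Av T U))"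
    by auto
  finally show ?thesis .
qed

lemma card_Av:
  assumes "finite A" "U \<subseteq> A" "U \<noteq> {}"
  shows "real (card (permutations_of_set A \<inter> Av T U))
          \<le> fact (card A) * (1 - real (card U) / real (card A)) ^ T"
  using assms
proof (induction T arbitrary: A)
  case 0
  have "card (permutations_of_set A \<inter> Av 0 U) \<le> card (permutations_of_set A)"
    by (rule card_mono) auto
  then have "real (card (permutations_of_set A \<inter> Av 0 U)) \<le> real (fact (card A))"
    using 0 by (simp only: of_nat_le_iff card_permutations_of_set)
  then show ?case by simp
next
  case (Suc T)
  have Ane: "A \<noteq> {}" using Suc.prems by auto
  have fin: "finite A" using Suc.prems by auto
  have "card (permutations_of_set A \<inter> Av (Suc T) U) =
     card (\<Union>x\<in>A - U. (\<lambda>xs. x # xs) ` (permutations_of_set (A - {x}) \<inter> Av T U))"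
    by (simp add: Av_split[OF fin Ane])
  also have "\<dots> = (\<Sum>x\<in>A - U. card ((\<lambda>xs. x # xs) ` (permutations_of_set (A - {x}) \<inter> Av T U)))"
    by (rule card_UN_disjoint) (use fin in auto)
  also have "\<dots> = (\<Sum>x\<in>A - U. card (permutations_of_set (A - {x}) \<inter> Av T U))"
    by (intro sum.cong refl card_image) (auto simp: inj_on_def)
  finally have eq: "real (card (permutations_of_set A \<inter> Av (Suc T) U)) =
       (\<Sum>x\<in>A - U. real (card (permutations_of_set (A - {x}) \<inter> Av T U)))" by simp
  define a where "a = card A"
  define u where "u = card U"
  have ua: "u \<le> a" unfolding u_def a_def using Suc.prems card_mono by blast
  have upos: "u \<ge> 1" unfolding u_def using Suc.prems
    by (metis One_nat_def Suc_leI card_gt_0_iff finite_subset)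
  show ?case
  proof (cases "A - U = {}")
    case True
    then have "U = A" using Suc.prems by auto
    moreover have "card A > 0" using fin Ane by (simp add: card_gt_0_iff)
    ultimately have "real (card U) / real (card A) = 1" by simp
    then show ?thesis using eq True by simp
  next
    case False
    then obtain y where y: "y \<in> A" "y \<notin> U" by auto
    have "U \<subseteq> A - {y}" using y Suc.prems by auto
    then have "u \<le> card (A - {y})" unfolding u_def by (intro card_mono) (use fin in auto)
    then have ua1: "u \<le> a - 1" using y fin unfolding a_def by simp
    have a1: "a \<ge> 2" using ua1 upos by linarith
    have bound: "real (card (permutations_of_set (A - {x}) \<inter> Av T U))
        \<le> fact (a - 1) * (1 - real u / real a) ^ T" if x: "x \<in> A - U" for x
    proof -
      have "real (card (permutations_of_set (A - {x}) \<inter> Av T U))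
          \<le> fact (card (A - {x})) * (1 - real (card U) / real (card (A - {x}))) ^ T"
        using x Suc.prems by (intro Suc.IH) auto
      also have "card (A - {x}) = a - 1" using x fin a_def by simp
      also have "(1 - real (card U) / real (a - 1)) ^ T \<le> (1 - real u / real a) ^ T"
      proof (rule power_mono)
        have "real u / real a \<le> real u / real (a - 1)"
          using a1 by (intro divide_left_mono) auto
        then show "1 - real (card U) / real (a - 1) \<le> 1 - real u / real a" by (simp add: u_def)
        show "0 \<le> 1 - real (card U) / real (a - 1)"
          using ua1 a1 by (simp add: u_def[symmetric] field_simps)
      qed
      finally show ?thesis by (simp add: mult_left_mono)
    qed
    have "real (card (permutations_of_set A \<inter> Av (Suc T) U))
          \<le> (\<Sum>x\<in>A - U. fact (a - 1) * (1 - real u / real a) ^ T)"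
      unfolding eq by (rule sum_mono) (rule bound)
    also have "\<dots> = real (a - u) * fact (a - 1) * (1 - real u / real a) ^ T"
      using Suc.prems fin by (simp add: card_Diff_subset a_def u_def finite_subset)
    also have "\<dots> = fact a * (1 - real u / real a) ^ Suc T"
    proof -
      from a1 obtain b where b: "a = Suc b" by (cases a) auto
      have "fact a = real a * fact (a - 1)" by (simp add: b)
      moreover have "real (a - u) = real a * (1 - real u / real a)" using a1 ua
        by (simp add: field_simps of_nat_diff)
      ultimately show ?thesis by simp
    qed
    finally show ?thesis by (simp add: a_def u_def)
  qed
qed

lemma prob_Av:
  assumes "finite A" "U \<subseteq> A" "U \<noteq> {}"
  shows "measure_pmf.prob (pmf_of_set (permutations_of_set A)) (Av T U)
          \<le> (1 - real (card U) / real (card A)) ^ T"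
proof -
  have fpos: "(0::real) < fact (card A)" by simp
  have "measure_pmf.prob (pmf_of_set (permutations_of_set A)) (Av T U)
     = card (permutations_of_set A \<inter> Av T U) / card (permutations_of_set A)"
    using assms by (intro measure_pmf_of_set) auto
  also have "\<dots> = real (card (permutations_of_set A \<inter> Av T U)) / fact (card A)"
    using assms by simp
  also have "\<dots> \<le> (1 - real (card U) / real (card A)) ^ T"
    using card_Av[OF assms, of T] fpos by (simp add: pos_divide_le_eq mult.commute)
  finally show ?thesis .
qed


fun enc :: "nat \<Rightarrow> nat \<Rightarrow> bool list" where
  "enc 0 x = []"
| "enc (Suc w) x = odd x # enc w (x div 2)"

fun dec :: "bool list \<Rightarrow> nat" where
  "dec [] = 0"
| "dec (b # bs) = of_bool b + 2 * dec bs"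

lemma length_enc [simp]: "length (enc w x) = w"
  by (induction w arbitrary: x) auto

lemma dec_enc: "dec (enc w x) = x mod 2 ^ w"
proof (induction w arbitrary: x)
  case 0 then show ?case by simp
next
  case (Suc w)
  have "x mod 2 ^ Suc w = x mod 2 + 2 * (x div 2 mod 2 ^ w)"
    by (simp add: mod_mult2_eq mult.commute)
  then show ?case using Suc by (simp add: odd_iff_mod_2_eq_one)
qed

function chunks :: "nat \<Rightarrow> bool list \<Rightarrow> bool list list" where
  "chunks k bs = (if k = 0 \<or> bs = [] then [] else take k bs # chunks k (drop k bs))"
  by pat_completeness auto
termination by (relation "Wellfounded.measure (\<lambda>(k, bs). length bs)") auto

declare chunks.simps [simp del]

lemma chunks_concat:
  assumes "k > 0" "\<forall>x\<in>set xss. length x = k"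
  shows "chunks k (concat xss) = xss"
  using assms
proof (induction xss)
  case Nil then show ?case by (simp add: chunks.simps)
next
  case (Cons x xss)
  then show ?case by (subst chunks.simps) auto
qed

type_synonym ast = "bool \<times> (nat \<times> nat) \<times> (nat \<times> nat) list"

definition encp :: "nat \<Rightarrow> nat \<times> nat \<Rightarrow> bool list" where
  "encp w p = enc w (fst p) @ enc w (snd p)"

definition decp :: "nat \<Rightarrow> bool list \<Rightarrow> nat \<times> nat" where
  "decp w bs = (dec (take w bs), dec (drop w bs))"

definition encs :: "nat \<Rightarrow> ast \<Rightarrow> bool list" where
  "encs w a = fst a # encp w (fst (snd a)) @ concat (map (encp w) (snd (snd a)))"

definition decs :: "nat \<Rightarrow> bool list \<Rightarrow> ast" where
  "decs w bs = (case bs of [] \<Rightarrow> (False, (0, 0), [])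
     | b # bs' \<Rightarrow> (b, decp w (take (2 * w) bs'), map (decp w) (chunks (2 * w) (drop (2 * w) bs'))))"

lemma length_encp [simp]: "length (encp w p) = 2 * w"
  by (simp add: encp_def)

lemma length_encs: "length (encs w a) = 1 + 2 * w + 2 * w * length (snd (snd a))"
  by (simp add: encs_def length_concat comp_def sum_list_triv algebra_simps)

definition inr :: "nat \<Rightarrow> nat \<times> nat \<Rightarrow> bool" where
  "inr w p \<longleftrightarrow> fst p < 2 ^ w \<and> snd p < 2 ^ w"

lemma decp_encp: "inr w p \<Longrightarrow> decp w (encp w p) = p"
  by (cases p) (simp add: decp_def encp_def inr_def dec_enc)

lemma decs_encs:
  assumes "w > 0" "inr w (fst (snd a))" "\<forall>p\<in>set (snd (snd a)). inr w p"
  shows "decs w (encs w a) = a"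
proof -
  obtain b c xs where a: "a = (b, c, xs)" by (cases a) auto
  have "chunks (2 * w) (concat (map (encp w) xs)) = map (encp w) xs"
    using assms by (intro chunks_concat) auto
  moreover have "map (decp w \<circ> encp w) xs = xs" using assms a
    by (intro map_idI) (simp add: decp_encp)
  ultimately show ?thesis using assms a
    by (simp add: decs_def encs_def decp_encp)
qed

fun astep :: "nat \<Rightarrow> ast \<Rightarrow> event \<Rightarrow> ast" where
  "astep T (fl, cur, xs) (VArr v c) = (fl, (v, c), if length xs < T then xs @ [(v, c)] else xs)"
| "astep T (fl, cur, xs) (EArr u v) = (fl \<or> (u, snd cur) \<in> set xs, cur, xs)"

fun dexec :: "(bool list \<Rightarrow> event \<Rightarrow> bool list) \<Rightarrow> event list \<Rightarrow> bool list \<Rightarrow> bool list \<times> nat" where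
  "dexec g [] s = (s, length s)"
| "dexec g (e # es) s = (case dexec g es (g s e) of (t, k) \<Rightarrow> (t, max (length s) k))"

lemma exec_det: "exec (\<lambda>s e. return_pmf (g s e)) es s = return_pmf (dexec g es s)"
  by (induction es arbitrary: s) (auto simp: bind_return_pmf split: prod.splits)

fun evr :: "nat \<Rightarrow> event \<Rightarrow> bool" where
  "evr w (VArr v c) = inr w (v, c)"
| "evr w (EArr u v) = True"

definition ainv :: "nat \<Rightarrow> nat \<Rightarrow> ast \<Rightarrow> bool" where
  "ainv w T a \<longleftrightarrow> inr w (fst (snd a)) \<and> (\<forall>p\<in>set (snd (snd a)). inr w p) \<and> length (snd (snd a)) \<le> T"

lemma ainv_step: "ainv w T a \<Longrightarrow> evr w e \<Longrightarrow> ainv w T (astep T a e)"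
  by (cases a; cases e) (auto simp: ainv_def)

lemma dexec_enc:
  assumes "w > 0" "ainv w T a" "\<forall>e\<in>set es. evr w e"
  shows "fst (dexec (\<lambda>s e. encs w (astep T (decs w s) e)) es (encs w a)) = encs w (foldl (astep T) a es)
       \<and> snd (dexec (\<lambda>s e. encs w (astep T (decs w s) e)) es (encs w a)) \<le> 1 + 2 * w + 2 * w * T"
  using assms(2,3)
proof (induction es arbitrary: a)
  case Nil
  then show ?case by (simp add: length_encs ainv_def)
next
  case (Cons e es)
  have d: "decs w (encs w a) = a" using Cons.prems assms(1) by (intro decs_encs) (auto simp: ainv_def)
  have inv': "ainv w T (astep T a e)" using Cons.prems by (intro ainv_step) auto
  have l: "length (encs w a) \<le> 1 + 2 * w + 2 * w * T"
    using Cons.prems by (simp add: length_encs ainv_def)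
  show ?case using Cons.IH[OF inv'] Cons.prems d l by (auto split: prod.splits)
qed



lemma astep_fl_mono: "fst a \<Longrightarrow> fst (foldl (astep T) a es)"
proof (induction es arbitrary: a)
  case Nil then show ?case by simp
next
  case (Cons e es)
  have "fst (astep T a e)" using Cons.prems by (cases a; cases e) auto
  then show ?case using Cons.IH by simp
qed

lemma edges_fold:
  "foldl (astep T) (fl, cur, xs) (map (\<lambda>u. EArr u v) ys) = (fl \<or> (\<exists>u\<in>set ys. (u, snd cur) \<in> set xs), cur, xs)"
  by (induction ys arbitrary: fl) auto

lemma vstream_Cons:
  "foldl (astep T) (fl, cur, xs) (vstream f E pre (v # vs)) =
   foldl (astep T) (fl \<or> (\<exists>u\<in>set (filter (\<lambda>u. {u, v} \<in> E) (rev pre)).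
            (u, f v) \<in> set (if length xs < T then xs @ [(v, f v)] else xs)),
     (v, f v), if length xs < T then xs @ [(v, f v)] else xs) (vstream f E (v # pre) vs)"
  by (simp add: edges_fold)

lemma sound:
  assumes "fl \<longrightarrow> mono_edges f E \<noteq> {}" "\<forall>p\<in>set xs. snd p = f (fst p)"
  shows "fst (foldl (astep T) (fl, cur, xs) (vstream f E pre vs)) \<longrightarrow> mono_edges f E \<noteq> {}"
  using assms
proof (induction vs arbitrary: pre fl cur xs)
  case Nil then show ?case by simp
next
  case (Cons v vs)
  define xs' where "xs' = (if length xs < T then xs @ [(v, f v)] else xs)"
  have inv: "\<forall>p\<in>set xs'. snd p = f (fst p)" using Cons.prems by (auto simp: xs'_def)
  have fl': "(fl \<or> (\<exists>u\<in>set (filter (\<lambda>u. {u, v} \<in> E) (rev pre)). (u, f v) \<in> set xs'))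
        \<longrightarrow> mono_edges f E \<noteq> {}"
  proof
    assume h: "fl \<or> (\<exists>u\<in>set (filter (\<lambda>u. {u, v} \<in> E) (rev pre)). (u, f v) \<in> set xs')"
    show "mono_edges f E \<noteq> {}"
    proof (cases fl)
      case True then show ?thesis using Cons.prems by simp
    next
      case False
      then obtain u where u: "{u, v} \<in> E" "(u, f v) \<in> set xs'" using h by auto
      then have "f u = f v" using inv by fastforce
      then have "{u, v} \<in> mono_edges f E" using u by (auto simp: mono_edges_def)
      then show ?thesis by auto
    qed
  qed
  show ?case unfolding vstream_Cons xs'_def[symmetric]
    by (rule Cons.IH[OF fl' inv])
qed

lemma complete:
  assumes "xs = map (\<lambda>v. (v, f v)) (take T (rev pre))"
    and "vs = ys @ w # zs" "u \<in> set (take T (rev pre @ ys))" "{u, w} \<in> E" "f u = f w"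
  shows "fst (foldl (astep T) (fl, cur, xs) (vstream f E pre vs))"
  using assms
proof (induction ys arbitrary: pre fl cur xs vs)
  case Nil
  define xs' where "xs' = (if length xs < T then xs @ [(w, f w)] else xs)"
  have "u \<in> set (rev pre)" using Nil.prems by (auto dest: in_set_takeD)
  moreover have "(u, f w) \<in> set xs'" using Nil.prems by (auto simp: xs'_def)
  ultimately have ex: "\<exists>u\<in>set (filter (\<lambda>u. {u, w} \<in> E) (rev pre)). (u, f w) \<in> set xs'"
    using Nil.prems by auto
  show ?case unfolding Nil.prems(2) append_Nil vstream_Cons xs'_def[symmetric]
    by (rule astep_fl_mono) (simp only: fst_conv ex simp_thms)
next
  case (Cons y ys)
  define xs' where "xs' = (if length xs < T then xs @ [(y, f y)] else xs)"
  have xe: "xs' = map (\<lambda>v. (v, f v)) (take T (rev (y # pre)))"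
    using Cons.prems(1) by (auto simp: xs'_def take_append min_def)
  have ui: "u \<in> set (take T (rev (y # pre) @ ys))" using Cons.prems(3) by simp
  show ?case unfolding Cons.prems(2) append_Cons vstream_Cons xs'_def[symmetric]
    by (rule Cons.IH[OF xe refl ui Cons.prems(4,5)])
qed



definition Wd :: "nat \<Rightarrow> nat \<Rightarrow> nat" where
  "Wd n C = nat \<lceil>log 2 (real (n + C))\<rceil> + 1"

definition Td :: "nat \<Rightarrow> nat \<Rightarrow> real \<Rightarrow> nat" where
  "Td n m \<epsilon> = min n (nat \<lceil>real n * log 2 (real n) / sqrt (\<epsilon> * real m)\<rceil>)"

definition gstep :: "nat \<Rightarrow> nat \<Rightarrow> nat \<Rightarrow> real \<Rightarrow> bool list \<Rightarrow> event \<Rightarrow> bool list" where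
  "gstep n m C \<epsilon> s e = (if \<epsilon> > 1 then [] else encs (Wd n C) (astep (Td n m \<epsilon>) (decs (Wd n C) s) e))"

definition ginit :: "nat \<Rightarrow> nat \<Rightarrow> real \<Rightarrow> bool list" where
  "ginit n C \<epsilon> = (if \<epsilon> > 1 then [] else encs (Wd n C) (False, (0, 0), []))"

definition gout :: "nat \<Rightarrow> nat \<Rightarrow> real \<Rightarrow> bool list \<Rightarrow> bool" where
  "gout n C \<epsilon> s = (if \<epsilon> > 1 then True else \<not> fst (decs (Wd n C) s))"

definition Alg :: stream_alg where
  "Alg = \<lparr> alg_init = (\<lambda>n m C \<epsilon>. return_pmf (ginit n C \<epsilon>)),
           alg_step = (\<lambda>n m C \<epsilon> s e. return_pmf (gstep n m C \<epsilon> s e)),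
           alg_out = (\<lambda>n m C \<epsilon> s. return_pmf (gout n C \<epsilon> s)) \<rparr>"

lemma outcome_Alg:
  "outcome Alg n E C f \<epsilon> = map_pmf
     (\<lambda>\<sigma>. (gout n C \<epsilon> (fst (dexec (gstep n (card E) C \<epsilon>) (vstream f E [] \<sigma>) (ginit n C \<epsilon>))),
            snd (dexec (gstep n (card E) C \<epsilon>) (vstream f E [] \<sigma>) (ginit n C \<epsilon>))))
     (pmf_of_set (permutations_of_set {0..<n}))"
  unfolding outcome_def Alg_def
  by (simp add: exec_det bind_return_pmf map_pmf_def split_beta)

lemma dexec_triv: "dexec (\<lambda>s e. []) es [] = ([], 0)"
  by (induction es) auto

lemma ainv_foldl: "ainv w T a \<Longrightarrow> \<forall>e\<in>set es. evr w e \<Longrightarrow> ainv w T (foldl (astep T) a es)"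
proof (induction es arbitrary: a)
  case Nil then show ?case by simp
next
  case (Cons e es)
  show ?case using Cons.IH[OF ainv_step[OF Cons.prems(1)]] Cons.prems(2) by simp
qed

lemma vstream_VArr: "VArr v c \<in> set (vstream f E pre vs) \<Longrightarrow> v \<in> set vs \<and> c = f v"
  by (induction vs arbitrary: pre) auto

lemma prob_ge:
  assumes "finite P" "P \<noteq> {}" "\<And>\<sigma>. \<sigma> \<in> P \<Longrightarrow> \<sigma> \<notin> B \<Longrightarrow> \<sigma> \<in> X"
  shows "measure_pmf.prob (pmf_of_set P) X \<ge> 1 - measure_pmf.prob (pmf_of_set P) B"
proof -
  have "P \<subseteq> (P \<inter> X) \<union> (P \<inter> B)" using assms(3) by auto
  then have "card P \<le> card ((P \<inter> X) \<union> (P \<inter> B))" using assms(1) by (intro card_mono) auto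
  also have "\<dots> \<le> card (P \<inter> X) + card (P \<inter> B)" by (rule card_Un_le)
  finally have le: "real (card P) \<le> real (card (P \<inter> X)) + real (card (P \<inter> B))" by linarith
  have cp: "real (card P) > 0" using assms by (simp add: card_gt_0_iff)
  have "1 - real (card (P \<inter> B)) / real (card P) \<le> real (card (P \<inter> X)) / real (card P)"
  proof -
    have "(real (card P) - real (card (P \<inter> B))) / real (card P) \<le> real (card (P \<inter> X)) / real (card P)"
      using le cp by (intro divide_right_mono) auto
    moreover have "1 - real (card (P \<inter> B)) / real (card P) = (real (card P) - real (card (P \<inter> B))) / real (card P)"
      using cp by (simp add: diff_divide_distrib)
    ultimately show ?thesis by simp
  qed
  then show ?thesis using assms by (simp add: measure_pmf_of_set)
qed

lemma pow2_Wd: "n + C \<ge> 1 \<Longrightarrow> real (n + C) < 2 ^ Wd n C"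
proof -
  assume N: "n + C \<ge> 1"
  define l where "l = log 2 (real (n + C))"
  have l0: "l \<ge> 0" using N unfolding l_def by simp
  have "real (n + C) = 2 powr l" unfolding l_def using N by simp
  also have "\<dots> \<le> 2 powr real (nat \<lceil>l\<rceil>)" using l0 by (intro powr_mono) linarith+
  also have "\<dots> = 2 ^ nat \<lceil>l\<rceil>" by (simp add: powr_realpow)
  also have "\<dots> < 2 ^ Wd n C" unfolding Wd_def l_def by simp
  finally show ?thesis .
qed



lemma far_detect:
  assumes P: "\<sigma> \<in> permutations_of_set {0..<n}" and G: "is_graph n E"
    and nA: "\<sigma> \<notin> Av T (\<Union>(mono_edges f E))"
  shows "fst (foldl (astep T) (False, (0, 0), []) (vstream f E [] \<sigma>))"
proof -
  define U where "U = \<Union>(mono_edges f E)"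
  have setS: "set \<sigma> = {0..<n}" using permutations_of_setD[OF P] by simp
  from nA obtain u0 where u0: "u0 \<in> set (take T \<sigma>)" "u0 \<in> U" by (auto simp: Av_def U_def)
  define k where "k = length (takeWhile (\<lambda>x. x \<notin> U) \<sigma>)"
  have tw: "takeWhile (\<lambda>x. x \<notin> U) \<sigma> = take k \<sigma>" unfolding k_def by (rule takeWhile_eq_take)
  have notU: "\<sigma> ! j \<notin> U" if "j < k" for j
  proof -
    have "\<sigma> ! j = takeWhile (\<lambda>x. x \<notin> U) \<sigma> ! j" using that k_def by (simp add: takeWhile_nth)
    moreover have "takeWhile (\<lambda>x. x \<notin> U) \<sigma> ! j \<in> set (takeWhile (\<lambda>x. x \<notin> U) \<sigma>)"
      using that k_def by (intro nth_mem) simp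
    ultimately show ?thesis by (auto dest: set_takeWhileD)
  qed
  have kT: "k < T"
  proof (rule ccontr)
    assume "\<not> k < T"
    then have "set (take T \<sigma>) \<subseteq> set (take k \<sigma>)" by (intro set_take_subset_set_take) simp
    then have "u0 \<in> set (takeWhile (\<lambda>x. x \<notin> U) \<sigma>)" using u0 tw by auto
    then show False using u0 by (auto dest: set_takeWhileD)
  qed
  have kl: "k < length \<sigma>"
  proof (rule ccontr)
    assume "\<not> k < length \<sigma>"
    then have "take k \<sigma> = \<sigma>" by simp
    then have "u0 \<in> set (takeWhile (\<lambda>x. x \<notin> U) \<sigma>)" using u0 tw by (auto dest: in_set_takeD)
    then show False using u0 by (auto dest: set_takeWhileD)
  qed
  define u where "u = \<sigma> ! k"
  have uU: "u \<in> U" unfolding u_def k_def using kl k_def nth_length_takeWhile by fastforce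
  then obtain e where e: "e \<in> mono_edges f E" "u \<in> e" unfolding U_def by auto
  then obtain a b where ab: "e \<in> E" "e = {a, b}" "f a = f b" by (auto simp: mono_edges_def)
  have "card e = 2" "e \<subseteq> {0..<n}" using G ab(1) by (auto simp: is_graph_def)
  then have anb: "a \<noteq> b" using ab(2) by auto
  define w where "w = (if u = a then b else a)"
  have ew: "e = {u, w}" "f u = f w" "w \<noteq> u" using e(2) ab anb by (auto simp: w_def)
  have wU: "w \<in> U" using e(1) ew(1) unfolding U_def by blast
  have "w \<in> set \<sigma>" using \<open>e \<subseteq> {0..<n}\<close> ew(1) setS by auto
  then obtain j where j: "j < length \<sigma>" "\<sigma> ! j = w" by (auto simp: in_set_conv_nth)
  have jk: "k < j"
  proof -
    have "j \<noteq> k" using j ew(3) u_def by auto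
    moreover have "\<not> j < k" using notU j(2) wU by auto
    ultimately show ?thesis by simp
  qed
  have split: "\<sigma> = take j \<sigma> @ w # drop (Suc j) \<sigma>" using j id_take_nth_drop[of j \<sigma>] by simp
  have "u \<in> set (take T ([] @ take j \<sigma>))"
  proof -
    have "take T ([] @ take j \<sigma>) = take (min T j) \<sigma>" by (simp add: min.commute)
    moreover have "k < length (take (min T j) \<sigma>)" using kT jk kl by simp
    moreover have "take (min T j) \<sigma> ! k = u" using kT jk u_def by simp
    ultimately show ?thesis by (metis nth_mem)
  qed
  then have "u \<in> set (take T (rev [] @ take j \<sigma>))" by simp
  then show ?thesis
    using complete[of "[]" f T "[]" \<sigma> "take j \<sigma>" w "drop (Suc j) \<sigma>" u E False "(0,0)"] split ew ab(1)
    by simp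
qed

lemma card_2subsets_le: "finite A \<Longrightarrow> card {e. e \<subseteq> A \<and> card e = 2} \<le> card A ^ 2"
proof -
  assume fin: "finite A"
  have eq: "card {e. e \<subseteq> A \<and> card e = 2} = card A choose 2" using n_subsets[OF fin] .
  show ?thesis
  proof (cases "2 \<le> card A")
    case True then show ?thesis unfolding eq by (rule binomial_le_pow)
  next
    case False then have "card A choose 2 = 0" by (simp add: binomial_eq_0)
    then show ?thesis unfolding eq by (metis zero_le)
  qed
qed

lemma graph_m_le: "is_graph n E \<Longrightarrow> card E \<le> n ^ 2"
proof -
  assume G: "is_graph n E"
  have "E \<subseteq> {e. e \<subseteq> {0..<n} \<and> card e = 2}" using G by (auto simp: is_graph_def)
  then have "card E \<le> card {e. e \<subseteq> {0..<n} \<and> card e = 2}" by (intro card_mono) auto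
  also have "\<dots> \<le> n ^ 2" using card_2subsets_le[of "{0..<n}"] by simp
  finally show ?thesis .
qed

lemma av_bound:
  assumes G: "is_graph n E" and m1: "card E \<ge> 1" and ep: "\<epsilon> > 0"
    and far: "real (card (mono_edges f E)) \<ge> \<epsilon> * real (card E)"
  shows "measure_pmf.prob (pmf_of_set (permutations_of_set {0..<n}))
           (Av (Td n (card E) \<epsilon>) (\<Union>(mono_edges f E))) \<le> 1 / real n"
proof -
  define M where "M = mono_edges f E"
  define U where "U = \<Union>M"
  define T where "T = Td n (card E) \<epsilon>"
  define s where "s = sqrt (\<epsilon> * real (card E))"
  have ME: "M \<subseteq> E" by (auto simp: M_def mono_edges_def)
  have Usub: "U \<subseteq> {0..<n}" using ME G by (auto simp: U_def is_graph_def)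
  have finU: "finite U" using Usub finite_subset by blast
  have spos: "s > 0" unfolding s_def using ep m1 by simp
  have "\<epsilon> * real (card E) > 0" using ep m1 by simp
  then have "real (card M) > 0" using far unfolding M_def by linarith
  then have "M \<noteq> {}" by auto
  then obtain e where eM: "e \<in> M" by auto
  then have "card e = 2" using ME G by (auto simp: is_graph_def)
  then have "e \<noteq> {}" by auto
  then have Une: "U \<noteq> {}" using eM unfolding U_def by auto
  have "M \<subseteq> {e. e \<subseteq> U \<and> card e = 2}" using ME G unfolding U_def by (auto simp: is_graph_def)
  then have "card M \<le> card {e. e \<subseteq> U \<and> card e = 2}" using finU by (intro card_mono) auto
  also have "\<dots> \<le> card U ^ 2" using card_2subsets_le[OF finU] .
  finally have cm: "card M \<le> card U ^ 2" .
  have h: "real (card M) \<le> real (card U) ^ 2" using cm by (metis of_nat_le_iff of_nat_power)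
  have "\<epsilon> * real (card E) \<le> real (card U) ^ 2" using far h unfolding M_def by linarith
  then have "s \<le> sqrt (real (card U) ^ 2)" unfolding s_def by (rule real_sqrt_le_mono)
  then have su: "s \<le> real (card U)" by simp
  have cU: "card U \<le> n" using card_mono[OF _ Usub] by simp
  have "card U > 0" using Une finU by (simp add: card_gt_0_iff)
  then have n1: "n \<ge> 1" using cU by linarith
  show ?thesis
  proof (cases "T = n")
    case True
    have "permutations_of_set {0..<n} \<inter> Av T U = {}"
    proof (rule equals0I)
      fix \<sigma> assume "\<sigma> \<in> permutations_of_set {0..<n} \<inter> Av T U"
      then have "set \<sigma> = {0..<n}" "length \<sigma> = n" "set (take T \<sigma>) \<inter> U = {}"
        by (auto simp: permutations_of_setD length_finite_permutations_of_set Av_def)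
      then show False using True Usub Une by auto
    qed
    then have "measure_pmf.prob (pmf_of_set (permutations_of_set {0..<n})) (Av T U) = 0"
      by (subst measure_pmf_of_set) auto
    then show ?thesis unfolding T_def U_def M_def by simp
  next
    case False
    define x where "x = real n * log 2 (real n) / s"
    have Tx: "real T \<ge> x" using False unfolding T_def Td_def x_def s_def
      by (simp add: min_def split: if_splits) linarith
    define t where "t = real (card U) / real n"
    have t01: "0 \<le> t" "t \<le> 1" using cU n1 unfolding t_def by auto
    have "measure_pmf.prob (pmf_of_set (permutations_of_set {0..<n})) (Av T U) \<le> (1 - t) ^ T"
      using prob_Av[of "{0..<n}" U T] Usub Une unfolding t_def by simp
    also have "\<dots> \<le> exp (- t) ^ T"
      using t01 by (intro power_mono) (auto simp: exp_ge_add_one_self[of "-t", simplified] )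
    also have "\<dots> = exp (- (t * real T))" by (simp add: exp_of_nat_mult[symmetric] algebra_simps)
    also have "\<dots> \<le> exp (- (t * x))" using Tx t01 by (simp add: mult_left_mono)
    also have "t * x = real (card U) / s * log 2 (real n)" unfolding t_def x_def using n1 by simp
    also have "exp (- (real (card U) / s * log 2 (real n))) \<le> exp (- log 2 (real n))"
    proof -
      have "1 \<le> real (card U) / s" using su spos by simp
      moreover have "0 \<le> log 2 (real n)" using n1 by simp
      ultimately have "log 2 (real n) \<le> real (card U) / s * log 2 (real n)"
        by (metis mult_le_cancel_right2 mult.commute order_refl mult_right_mono mult_1)
      then show ?thesis by simp
    qed
    also have "\<dots> \<le> exp (- ln (real n))"
    proof -
      have l0: "ln (real n) \<ge> 0" using n1 by simp
      have "ln (real n) * ln 2 \<le> ln (real n) * 1"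
        using l0 ln_2_less_1 by (intro mult_left_mono) auto
      then have "ln (real n) \<le> ln (real n) / ln 2" by (simp add: le_divide_eq)
      then have "ln (real n) \<le> log 2 (real n)" by (simp add: log_def)
      then show ?thesis by simp
    qed
    also have "\<dots> = 1 / real n" using n1 by (simp add: exp_minus inverse_eq_divide)
    finally show ?thesis unfolding T_def U_def M_def .
  qed
qed



lemma graph_n2: "is_graph n E \<Longrightarrow> card E \<ge> 1 \<Longrightarrow> n \<ge> 2"
proof -
  assume G: "is_graph n E" and m: "card E \<ge> 1"
  then have "E \<noteq> {}" by auto
  then obtain e where "e \<in> E" by auto
  then have "card e = 2" "e \<subseteq> {0..<n}" using G by (auto simp: is_graph_def)
  then have "2 \<le> card {0..<n}" by (metis card_mono finite_atLeastLessThan)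
  then show ?thesis by simp
qed

lemma space_arith:
  assumes G: "is_graph n E" and m1: "card E \<ge> 1" and ep: "\<epsilon> > 0" and e1: "\<not> \<epsilon> > 1"
  shows "real (1 + 2 * Wd n C + 2 * Wd n C * Td n (card E) \<epsilon>)
         \<le> 19 * (log 2 (real (n + C))) ^ 2 * (real n / sqrt (\<epsilon> * real (card E)))"
proof -
  define L where "L = log 2 (real (n + C))"
  define s where "s = sqrt (\<epsilon> * real (card E))"
  define B where "B = real n / s"
  define w where "w = Wd n C"
  define T where "T = Td n (card E) \<epsilon>"
  have n2: "n \<ge> 2" using graph_n2[OF G m1] .
  have L1: "L \<ge> 1"
  proof -
    have "log 2 2 \<le> log 2 (real (n + C))" using n2 by (intro log_le_cancel_iff[THEN iffD2]) auto
    then show ?thesis unfolding L_def by simp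
  qed
  have spos: "s > 0" unfolding s_def using ep m1 by simp
  have "\<epsilon> * real (card E) \<le> real (card E)" using e1 m1 by simp
  also have "\<dots> \<le> real n ^ 2" using graph_m_le[OF G] by (metis of_nat_le_iff of_nat_power)
  finally have "s \<le> sqrt (real n ^ 2)" unfolding s_def by (rule real_sqrt_le_mono)
  then have sn: "s \<le> real n" by simp
  have B1: "B \<ge> 1" unfolding B_def using sn spos by simp
  have w_le: "real w \<le> L + 2"
  proof -
    have "L \<ge> 0" using L1 by simp
    then have "real (nat \<lceil>L\<rceil>) \<le> L + 1" by linarith
    then show ?thesis unfolding w_def Wd_def L_def by simp
  qed
  define x where "x = real n * log 2 (real n) / s"
  have x0: "x \<ge> 0" unfolding x_def using n2 spos by simp
  have "real T \<le> real (nat \<lceil>x\<rceil>)" unfolding T_def Td_def x_def s_def by simp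
  also have "\<dots> \<le> x + 1" using x0 by linarith
  finally have Tx: "real T \<le> x + 1" .
  have "log 2 (real n) \<le> L" unfolding L_def using n2 by simp
  then have "x \<le> L * B" unfolding x_def B_def using n2 spos
    by (simp add: divide_right_mono mult.commute mult_right_mono)
  with Tx have T_le: "real T \<le> L * B + 1" by linarith
  have "real (1 + 2 * w + 2 * w * T) = 1 + 2 * real w * (1 + real T)" by (simp add: algebra_simps)
  also have "\<dots> \<le> 1 + 2 * (L + 2) * (L * B + 2)"
    using w_le T_le by (intro add_left_mono mult_mono) auto
  also have "\<dots> = 2 * (L * L * B) + 4 * L + 4 * (L * B) + 9" by (simp add: algebra_simps)
  also have "\<dots> \<le> 19 * (L * L * B)"
  proof -
    have LB: "L * B \<ge> 1" using L1 B1 by (metis mult_mono' mult_1 zero_le_one)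
    have "L * (L * B) \<ge> L * 1" using LB L1 by (intro mult_left_mono) auto
    then have h1: "L * L * B \<ge> L" by (simp add: mult.assoc)
    have "L * (L * B) \<ge> 1 * (L * B)" using LB L1 by (intro mult_right_mono) auto
    then have h2: "L * L * B \<ge> L * B" by (simp add: mult.assoc)
    show ?thesis using h1 h2 LB by linarith
  qed
  also have "\<dots> = 19 * L ^ 2 * B" by (simp add: power2_eq_square)
  finally show ?thesis unfolding L_def B_def s_def w_def T_def .
qed

lemma main:
  assumes G: "is_graph n E" and m1: "card E \<ge> 1" and fC: "\<forall>v < n. f v < C" and ep: "\<epsilon> > 0"
  shows "(valid_coloring f E \<longrightarrow>
            measure_pmf.prob (outcome Alg n E C f \<epsilon>) {x. fst x = True} \<ge> 1 - 1 / real n powr (1::real))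
       \<and> (far_from_valid \<epsilon> f E \<longrightarrow>
            measure_pmf.prob (outcome Alg n E C f \<epsilon>) {x. fst x = False} \<ge> 1 - 1 / real n powr (1::real))
       \<and> measure_pmf.prob (outcome Alg n E C f \<epsilon>)
            {x. real (snd x) \<le> (19::real) * (log 2 (real (n + C))) ^ 2 * (real n / sqrt (\<epsilon> * real (card E)))}
           \<ge> 1 - 1 / real n powr (1::real)"
proof -
  define P where "P = permutations_of_set {0..<n}"
  define w where "w = Wd n C"
  define T where "T = Td n (card E) \<epsilon>"
  define a0 :: ast where "a0 = (False, (0, 0), [])"
  define run where "run \<sigma> = foldl (astep T) a0 (vstream f E [] \<sigma>)" for \<sigma>
  define Gf where "Gf \<sigma> = (gout n C \<epsilon> (fst (dexec (gstep n (card E) C \<epsilon>) (vstream f E [] \<sigma>) (ginit n C \<epsilon>))),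
            snd (dexec (gstep n (card E) C \<epsilon>) (vstream f E [] \<sigma>) (ginit n C \<epsilon>)))" for \<sigma>
  have out: "outcome Alg n E C f \<epsilon> = map_pmf Gf (pmf_of_set P)"
    unfolding Gf_def P_def by (rule outcome_Alg)
  have finP: "finite P" and Pne: "P \<noteq> {}" unfolding P_def by auto
  have n2: "n \<ge> 2" using graph_n2[OF G m1] .
  have npow: "real n powr (1::real) = real n" using n2 by simp
  have w0: "w > 0" unfolding w_def Wd_def by simp
  have pw: "real (n + C) < 2 ^ w" unfolding w_def using n2 by (intro pow2_Wd) simp
  have lt: "x < 2 ^ w" if "x < n + C" for x
  proof -
    have "real x < 2 ^ w" using that pw by (metis of_nat_less_iff order.strict_trans)
    then show ?thesis by (metis of_nat_less_iff of_nat_numeral of_nat_power)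
  qed
  have ainv0: "ainv w T a0" unfolding a0_def ainv_def inr_def by simp
  have key: "fst (Gf \<sigma>) = (\<not> fst (run \<sigma>)) \<and> snd (Gf \<sigma>) \<le> 1 + 2 * w + 2 * w * T"
    if \<sigma>: "\<sigma> \<in> P" and e1: "\<not> \<epsilon> > 1" for \<sigma>
  proof -
    have gs: "gstep n (card E) C \<epsilon> = (\<lambda>s e. encs w (astep T (decs w s) e))"
      using e1 unfolding gstep_def w_def T_def by (intro ext) simp
    have gi: "ginit n C \<epsilon> = encs w a0" using e1 unfolding ginit_def w_def a0_def by simp
    have setS: "set \<sigma> = {0..<n}" using \<sigma> unfolding P_def by (simp add: permutations_of_setD)
    have evs: "\<forall>e\<in>set (vstream f E [] \<sigma>). evr w e"
    proof
      fix e assume e: "e \<in> set (vstream f E [] \<sigma>)"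
      show "evr w e"
      proof (cases e)
        case (VArr v c)
        then have "v \<in> set \<sigma>" "c = f v" using vstream_VArr e by auto
        then have "v < n" "c < C" using setS fC by auto
        then show ?thesis using VArr lt by (simp add: inr_def)
      qed simp
    qed
    have D: "fst (dexec (\<lambda>s e. encs w (astep T (decs w s) e)) (vstream f E [] \<sigma>) (encs w a0)) = encs w (run \<sigma>)
       \<and> snd (dexec (\<lambda>s e. encs w (astep T (decs w s) e)) (vstream f E [] \<sigma>) (encs w a0)) \<le> 1 + 2 * w + 2 * w * T"
      unfolding run_def by (rule dexec_enc[OF w0 ainv0 evs])
    have inv: "ainv w T (run \<sigma>)" unfolding run_def by (rule ainv_foldl[OF ainv0 evs])
    have "decs w (encs w (run \<sigma>)) = run \<sigma>" using inv w0 by (intro decs_encs) (auto simp: ainv_def)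
    then show ?thesis using D e1 unfolding Gf_def gs gi gout_def w_def by simp
  qed
  have triv: "Gf \<sigma> = (True, 0)" if "\<epsilon> > 1" for \<sigma>
  proof -
    have "gstep n (card E) C \<epsilon> = (\<lambda>s e. [])" using that unfolding gstep_def by (intro ext) simp
    moreover have "ginit n C \<epsilon> = []" using that unfolding ginit_def by simp
    ultimately show ?thesis using that unfolding Gf_def gout_def by (simp add: dexec_triv)
  qed
  have part1: "measure_pmf.prob (outcome Alg n E C f \<epsilon>) {x. fst x = True} \<ge> 1 - 1 / real n powr (1::real)"
    if v: "valid_coloring f E"
  proof -
    have "measure_pmf.prob (pmf_of_set P) (Gf -` {x. fst x = True}) \<ge> 1 - measure_pmf.prob (pmf_of_set P) {}"
    proof (rule prob_ge[OF finP Pne])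
      fix \<sigma> assume \<sigma>: "\<sigma> \<in> P"
      show "\<sigma> \<in> Gf -` {x. fst x = True}"
      proof (cases "\<epsilon> > 1")
        case True then show ?thesis using triv by simp
      next
        case False
        have "fst (run \<sigma>) \<longrightarrow> mono_edges f E \<noteq> {}" unfolding run_def a0_def
          by (rule sound) auto
        then show ?thesis using key[OF \<sigma> False] v by (simp add: valid_coloring_def)
      qed
    qed
    then have "measure_pmf.prob (pmf_of_set P) (Gf -` {x. fst x = True}) \<ge> 1" by simp
    moreover have "1 / real n powr (1::real) \<ge> 0" by simp
    ultimately show ?thesis unfolding out measure_map_pmf by linarith
  qed
  have part2: "measure_pmf.prob (outcome Alg n E C f \<epsilon>) {x. fst x = False} \<ge> 1 - 1 / real n powr (1::real)"
    if far: "far_from_valid \<epsilon> f E"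
  proof -
    have finE: "finite E" using m1 card.infinite by force
    have "mono_edges f E \<subseteq> E" by (auto simp: mono_edges_def)
    then have "card (mono_edges f E) \<le> card E" using finE by (intro card_mono) auto
    then have "\<epsilon> * real (card E) \<le> real (card E)" using far unfolding far_from_valid_def by linarith
    then have e1: "\<not> \<epsilon> > 1" using m1 by (simp add: mult_le_cancel_right1)
    have "measure_pmf.prob (pmf_of_set P) (Gf -` {x. fst x = False})
          \<ge> 1 - measure_pmf.prob (pmf_of_set P) (Av T (\<Union>(mono_edges f E)))"
    proof (rule prob_ge[OF finP Pne])
      fix \<sigma> assume \<sigma>: "\<sigma> \<in> P" and nA: "\<sigma> \<notin> Av T (\<Union>(mono_edges f E))"
      have "fst (run \<sigma>)" unfolding run_def a0_def
        using far_detect[OF \<sigma>[unfolded P_def] G nA] .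
      then show "\<sigma> \<in> Gf -` {x. fst x = False}" using key[OF \<sigma> e1] by simp
    qed
    moreover have "measure_pmf.prob (pmf_of_set P) (Av T (\<Union>(mono_edges f E))) \<le> 1 / real n"
      unfolding P_def T_def using av_bound[OF G m1 ep] far unfolding far_from_valid_def by blast
    ultimately show ?thesis unfolding out measure_map_pmf npow by linarith
  qed
  have part3: "measure_pmf.prob (outcome Alg n E C f \<epsilon>)
            {x. real (snd x) \<le> (19::real) * (log 2 (real (n + C))) ^ 2 * (real n / sqrt (\<epsilon> * real (card E)))}
           \<ge> 1 - 1 / real n powr (1::real)"
  proof -
    define S :: "(bool \<times> nat) set" where "S = {x. real (snd x) \<le> (19::real) * (log 2 (real (n + C))) ^ 2 * (real n / sqrt (\<epsilon> * real (card E)))}"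
    have "measure_pmf.prob (pmf_of_set P) (Gf -` S) \<ge> 1 - measure_pmf.prob (pmf_of_set P) {}"
    proof (rule prob_ge[OF finP Pne])
      fix \<sigma> assume \<sigma>: "\<sigma> \<in> P"
      show "\<sigma> \<in> Gf -` S"
      proof (cases "\<epsilon> > 1")
        case True then show ?thesis using triv by (simp add: S_def)
      next
        case False
        have "real (snd (Gf \<sigma>)) \<le> real (1 + 2 * w + 2 * w * T)"
          using key[OF \<sigma> False] by (simp only: of_nat_le_iff)
        also have "\<dots> \<le> (19::real) * (log 2 (real (n + C))) ^ 2 * (real n / sqrt (\<epsilon> * real (card E)))"
          unfolding w_def T_def by (rule space_arith[OF G m1 ep False])
        finally show ?thesis by (simp add: S_def)
      qed
    qed
    then have "measure_pmf.prob (pmf_of_set P) (Gf -` S) \<ge> 1" by simp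
    moreover have "1 / real n powr (1::real) \<ge> 0" by simp
    ultimately show ?thesis unfolding out measure_map_pmf S_def by linarith
  qed
  show ?thesis using part1 part2 part3 by blast
qed

theorem theorem4p3:
  "\<exists>A :: stream_alg. \<exists>c > (0::real). \<exists>K :: real. \<exists>k :: nat.
     \<forall>n E C f \<epsilon>.
       is_graph n E \<and> card E \<ge> 1 \<and> (\<forall>v < n. f v < C) \<and> \<epsilon> > 0 \<longrightarrow>
         (valid_coloring f E \<longrightarrow>
            measure_pmf.prob (outcome A n E C f \<epsilon>) {x. fst x = True} \<ge> 1 - 1 / real n powr c)
       \<and> (far_from_valid \<epsilon> f E \<longrightarrow>
            measure_pmf.prob (outcome A n E C f \<epsilon>) {x. fst x = False} \<ge> 1 - 1 / real n powr c)
       \<and> measure_pmf.prob (outcome A n E C f \<epsilon>)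
            {x. real (snd x) \<le> K * (log 2 (real (n + C))) ^ k * (real n / sqrt (\<epsilon> * real (card E)))}
           \<ge> 1 - 1 / real n powr c"
proof -
  have H: "\<forall>n E C f \<epsilon>.
       is_graph n E \<and> card E \<ge> 1 \<and> (\<forall>v < n. f v < C) \<and> \<epsilon> > 0 \<longrightarrow>
         (valid_coloring f E \<longrightarrow>
            measure_pmf.prob (outcome Alg n E C f \<epsilon>) {x. fst x = True} \<ge> 1 - 1 / real n powr (1::real))
       \<and> (far_from_valid \<epsilon> f E \<longrightarrow>
            measure_pmf.prob (outcome Alg n E C f \<epsilon>) {x. fst x = False} \<ge> 1 - 1 / real n powr (1::real))
       \<and> measure_pmf.prob (outcome Alg n E C f \<epsilon>)
            {x. real (snd x) \<le> (19::real) * (log 2 (real (n + C))) ^ 2 * (real n / sqrt (\<epsilon> * real (card E)))}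
           \<ge> 1 - 1 / real n powr (1::real)"
    by (intro allI impI, elim conjE, rule main)
  show ?thesis
    apply (rule exI[of _ Alg], rule exI[of _ "1::real"], rule conjI, simp)
    apply (rule exI[of _ 19], rule exI[of _ 2])
    by (rule H)
qed

end
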